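(* In the setup described in the context, for all vector fields $x,y$, $$\tilde\rho(x,y)=\rho(x,y)+\tfrac18(3\tilde\tau^*+\tilde\tau-3\tau-\tau^* )\,g(x,y)+\tfrac18(3\tilde\tau+\tilde\tau^*-3\tau^*-\tau)\,\tilde g(x,y).$$
   Context: Let $M$ be a 3-dimensional smooth manifold. Fix a coordinate chart $(x^1,x^2,x^3)$ with coordinate vector fields $\partial_i$. Structures: - $g$ is a Riemannian metric with $g(\partial_1,\partial_1)=g(\partial_2,\partial_2)=A$, $g(\partial_3,\partial_3)=B$ and $g(\partial_i,\partial_j)=0$ for $i\ne j$. Here $A,B$ are smooth positive functions. - $Q$ is the $(1,1)$-tensor field with $Q\partial_1=\partial_2$, $Q\partial_2=-\partial_1$, $Q\partial_3=\partial_3$. - $P=Q^2$. - $\tilde g(x,y)=g(x,Py)$ is the associated indefinite metric, with components $\mathrm{diag}(-A,-A,B)$. Connections and curvature: - $\nabla$ and $\tilde\nabla$ are the Levi-Civita connections of $g$ and $\tilde g$. - $R(x,y)z=\nabla_x\nabla_yz-\nabla_y\nabla_xz-\nabla_{[x,y]}z$ and $R(x,y,z,t)=g(R(x,y)z,t)$. Analogously $\tilde R$ is built from $\tilde\nabla$, with $\tilde R(x,y,z,t)=\tilde g(\tilde R(x,y)z,t)$. Ricci tensors and scalar quantities ($\{e_i\}$ a basis; $g^{ij}$ and $\tilde g^{ij}$ are the inverse matrices of $g_{ij}$ and $\tilde g_{ij}$): - $\rho(y,z)=g^{ij}R(e_i,y,z,e_j)$ and $\tau=g^{ij}\rho(e_i,e_j)$.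 - $\tilde\rho(y,z)=\tilde g^{ij}\tilde R(e_i,y,z,e_j)$ and $\tilde\tau=\tilde g^{ij}\tilde\rho(e_i,e_j)$. - $\tau^*=\tilde g^{ij}\rho(e_i,e_j)$ and $\tilde\tau^*=g^{ij}\tilde\rho(e_i,e_j)$. *)

theory Defs
  imports "HOL-Analysis.Analysis"
begin

text \<open>Local coordinates: points of the chart domain are vectors in real^3,
  coordinate index i :: 3, coordinate vector field partial_i = axis i 1.
  We take partial_1, partial_2, partial_3 to be the indices 1, 2, 3 of type 3.\<close>

type_synonym pt = "real^3"
type_synonym vf = "pt \<Rightarrow> real^3"
type_synonym mfield = "pt \<Rightarrow> real^3^3"

definition pd :: "3 \<Rightarrow> (pt \<Rightarrow> real) \<Rightarrow> pt \<Rightarrow> real" where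
  "pd i f p = frechet_derivative f (at p) (axis i 1)"

fun ipd :: "3 list \<Rightarrow> (pt \<Rightarrow> real) \<Rightarrow> pt \<Rightarrow> real" where
  "ipd [] f = f"
| "ipd (i # is) f = pd i (ipd is f)"

definition smooth_on :: "pt set \<Rightarrow> (pt \<Rightarrow> real) \<Rightarrow> bool" where
  "smooth_on U f \<longleftrightarrow> (\<forall>is. \<forall>p\<in>U. ipd is f differentiable (at p))"

definition smooth_vf :: "pt set \<Rightarrow> vf \<Rightarrow> bool" where
  "smooth_vf U X \<longleftrightarrow> (\<forall>k. smooth_on U (\<lambda>q. X q $ k))"

definition coord :: "3 \<Rightarrow> vf" where
  "coord i = (\<lambda>q. axis i 1)"

definition metric :: "mfield \<Rightarrow> vf \<Rightarrow> vf \<Rightarrow> pt \<Rightarrow> real" where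
  "metric G X Y p = X p \<bullet> (G p *v Y p)"

definition ginv :: "mfield \<Rightarrow> pt \<Rightarrow> real^3^3" where
  "ginv G p = matrix_inv (G p)"

definition christ :: "mfield \<Rightarrow> 3 \<Rightarrow> 3 \<Rightarrow> 3 \<Rightarrow> pt \<Rightarrow> real" where
  "christ G k i j p = (1/2) * (\<Sum>l\<in>UNIV. ginv G p $ k $ l *
     (pd i (\<lambda>q. G q $ j $ l) p + pd j (\<lambda>q. G q $ i $ l) p - pd l (\<lambda>q. G q $ i $ j) p))"

definition cov :: "mfield \<Rightarrow> vf \<Rightarrow> vf \<Rightarrow> vf" where
  "cov G X Y = (\<lambda>p. \<chi> k. \<Sum>i\<in>UNIV. X p $ i *
     (pd i (\<lambda>q. Y q $ k) p + (\<Sum>j\<in>UNIV. christ G k i j p * Y p $ j)))"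

definition bracket :: "vf \<Rightarrow> vf \<Rightarrow> vf" where
  "bracket X Y = (\<lambda>p. \<chi> k. \<Sum>i\<in>UNIV.
     X p $ i * pd i (\<lambda>q. Y q $ k) p - Y p $ i * pd i (\<lambda>q. X q $ k) p)"

definition curv :: "mfield \<Rightarrow> vf \<Rightarrow> vf \<Rightarrow> vf \<Rightarrow> vf" where
  "curv G X Y Z = (\<lambda>p. cov G X (cov G Y Z) p - cov G Y (cov G X Z) p - cov G (bracket X Y) Z p)"

definition curv4 :: "mfield \<Rightarrow> vf \<Rightarrow> vf \<Rightarrow> vf \<Rightarrow> vf \<Rightarrow> pt \<Rightarrow> real" where
  "curv4 G X Y Z T p = metric G (curv G X Y Z) T p"

definition ricci :: "mfield \<Rightarrow> vf \<Rightarrow> vf \<Rightarrow> pt \<Rightarrow> real" where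
  "ricci G Y Z p = (\<Sum>i\<in>UNIV. \<Sum>j\<in>UNIV. ginv G p $ i $ j * curv4 G (coord i) Y Z (coord j) p)"

definition rtrace :: "mfield \<Rightarrow> mfield \<Rightarrow> pt \<Rightarrow> real" where
  "rtrace H G p = (\<Sum>i\<in>UNIV. \<Sum>j\<in>UNIV. ginv H p $ i $ j * ricci G (coord i) (coord j) p)"

definition gmat :: "(pt \<Rightarrow> real) \<Rightarrow> (pt \<Rightarrow> real) \<Rightarrow> mfield" where
  "gmat A B = (\<lambda>p. vector [vector [A p, 0, 0], vector [0, A p, 0], vector [0, 0, B p]])"

text \<open>Q partial_1 = partial_2, Q partial_2 = - partial_1, Q partial_3 = partial_3
  (columns of the matrix are the images of the coordinate vectors).\<close>
definition Qmat :: "real^3^3" where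
  "Qmat = vector [vector [0, -1, 0], vector [1, 0, 0], vector [0, 0, 1]]"

definition Pmat :: "real^3^3" where
  "Pmat = Qmat ** Qmat"

text \<open>Associated metric gt(x,y) = g(x, P y), i.e. matrix G P.\<close>
definition gtmat :: "(pt \<Rightarrow> real) \<Rightarrow> (pt \<Rightarrow> real) \<Rightarrow> mfield" where
  "gtmat A B = (\<lambda>p. gmat A B p ** Pmat)"

end

theory Submission
  imports Defs
begin

lemma pd_has: "(f has_derivative f') (at p) \<Longrightarrow> pd i f p = f' (axis i 1)"
  unfolding pd_def using frechet_derivative_at by metis
lemma diff_has: "f differentiable (at p) \<Longrightarrow> (f has_derivative frechet_derivative f (at p)) (at p)"
  using frechet_derivative_works by blast
lemma pd_cong_open:
  assumes "open U" "p \<in> U" "\<forall>q\<in>U. f q = g q"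
  shows "pd i f p = pd i g p"
proof -
  have "(\<lambda>f'. (f has_derivative f') (at p)) = (\<lambda>f'. (g has_derivative f') (at p))"
  proof (rule ext, rule iffI)
    fix D assume "(f has_derivative D) (at p)"
    then show "(g has_derivative D) (at p)"
      by (rule has_derivative_transform_within_open[of f _ p UNIV U g]) (use assms in auto)
  next
    fix D assume "(g has_derivative D) (at p)"
    then show "(f has_derivative D) (at p)"
      by (rule has_derivative_transform_within_open[of g _ p UNIV U f]) (use assms in auto)
  qed
  then show ?thesis unfolding pd_def frechet_derivative_def by simp
qed

lemma pd_add: "f differentiable (at p) \<Longrightarrow> g differentiable (at p) \<Longrightarrow>
   pd i (\<lambda>q. f q + g q) p = pd i f p + pd i g p"
  using pd_has[OF has_derivative_add[OF diff_has diff_has]] by (simp add: pd_def)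
lemma pd_diff: "f differentiable (at p) \<Longrightarrow> g differentiable (at p) \<Longrightarrow>
   pd i (\<lambda>q. f q - g q) p = pd i f p - pd i g p"
  unfolding pd_def by (rule pd_has[OF has_derivative_diff[OF diff_has diff_has], unfolded pd_def])

lemma pd_mult: "f differentiable (at p) \<Longrightarrow> g differentiable (at p) \<Longrightarrow>
   pd i (\<lambda>q. f q * g q :: real) p = f p * pd i g p + pd i f p * g p"
proof -
  assume a: "f differentiable (at p)" "g differentiable (at p)"
  have "((\<lambda>q. f q * g q) has_derivative (\<lambda>h. f p * frechet_derivative g (at p) h + frechet_derivative f (at p) h * g p)) (at p)"
    by (rule has_derivative_mult[OF diff_has[OF a(1)] diff_has[OF a(2)]])
  from pd_has[OF this, of i] show ?thesis by (simp only: pd_def)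
qed

lemma pd_const: "pd i (\<lambda>q. c) p = 0"
  unfolding pd_def by (simp only: frechet_derivative_const)
lemma pd_cmult: "f differentiable (at p) \<Longrightarrow> pd i (\<lambda>q. c * f q :: real) p = c * pd i f p"
proof -
  assume a: "f differentiable (at p)"
  have "pd i (\<lambda>q. c * f q :: real) p = c * pd i f p + pd i (\<lambda>q. c) p * f p"
    by (rule pd_mult[OF differentiable_const a])
  then show ?thesis by (simp only: pd_const mult_zero_left add_0_right)
qed

lemma pd_minus: "f differentiable (at p) \<Longrightarrow> pd i (\<lambda>q. - f q :: real) p = - pd i f p"
  using pd_cmult[of f p i "-1"] by (simp only: mult_minus1)

lemma sum3: "(\<Sum>i\<in>(UNIV::3 set). f i) = f 1 + f 2 + (f 3 :: real)"
proof -
  have u: "(UNIV::3 set) = {1,2,3}" by (rule UNIV_3)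
  have "(1::3) \<noteq> 2" "(1::3) \<noteq> 3" "(2::3) \<noteq> 3" by simp_all
  then show ?thesis unfolding u by (simp add: add.assoc)
qed

lemma line_deriv:
  fixes f :: "pt \<Rightarrow> real"
  assumes "f differentiable (at (v + s *\<^sub>R axis j 1))"
  shows "((\<lambda>s. f (v + s *\<^sub>R axis j 1)) has_derivative (\<lambda>h. h * pd j f (v + s *\<^sub>R axis j 1))) (at s)"
proof -
  let ?q = "v + s *\<^sub>R axis j 1"
  have i: "((\<lambda>s. v + s *\<^sub>R axis j 1) has_derivative (\<lambda>h. h *\<^sub>R axis j 1)) (at s)"
    by (auto intro!: derivative_eq_intros)
  have "((\<lambda>s. f (v + s *\<^sub>R axis j 1)) has_derivative (\<lambda>h. frechet_derivative f (at ?q) (h *\<^sub>R axis j 1))) (at s)"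
    by (rule has_derivative_compose[OF i diff_has[OF assms]])
  moreover have "\<And>h. frechet_derivative f (at ?q) (h *\<^sub>R axis j 1) = h * pd j f ?q"
    using linear_cmul[OF linear_frechet_derivative[OF assms]] unfolding pd_def by simp
  ultimately show ?thesis by simp
qed


lemma schwarz_aux:
  fixes f :: "pt \<Rightarrow> real"
  assumes U: "open U" "p \<in> U" and df: "\<forall>q\<in>U. f differentiable (at q)"
    and dg: "pd j f differentiable (at p)" and e: "\<epsilon> > 0"
  shows "\<exists>\<delta>>0. \<forall>t. 0 < t \<and> t < \<delta> \<longrightarrow>
     \<bar>(f (p + t *\<^sub>R axis i 1 + t *\<^sub>R axis j 1) - f (p + t *\<^sub>R axis i 1) - f (p + t *\<^sub>R axis j 1) + f p) / t^2
        - pd i (pd j f) p\<bar> \<le> \<epsilon>"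
proof -
  let ?g = "pd j f"
  let ?L = "frechet_derivative ?g (at p)"
  define e1 where "e1 = (axis i 1 :: pt)"
  define d1 where "d1 = (axis j 1 :: pt)"
  have ne1: "norm e1 = 1" "norm d1 = 1" unfolding e1_def d1_def by (simp_all add: norm_axis_1)
  obtain \<delta>0 where \<delta>0: "\<delta>0 > 0" "ball p \<delta>0 \<subseteq> U" using U openE by blast
  have hd: "(?g has_derivative ?L) (at p)" using diff_has[OF dg] .
  then have bl: "linear ?L" using has_derivative_linear by blast
  from hd have "\<forall>e>0. \<exists>d>0. \<forall>y. norm (y - p) < d \<longrightarrow> norm (?g y - ?g p - ?L (y - p)) \<le> e * norm (y - p)"
    by (simp add: has_derivative_at_alt)
  then obtain \<delta>1 where \<delta>1: "\<delta>1 > 0" and H: "\<And>y. norm (y - p) < \<delta>1 \<Longrightarrow> \<bar>?g y - ?g p - ?L (y - p)\<bar> \<le> (\<epsilon>/3) * norm (y - p)"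
    using e by (metis real_norm_def zero_less_divide_iff zero_less_numeral)
  define \<delta> where "\<delta> = min \<delta>0 \<delta>1 / 2"
  have "\<delta> > 0" using \<delta>0 \<delta>1 by (simp add: \<delta>_def)
  moreover have "\<bar>(f (p + t *\<^sub>R e1 + t *\<^sub>R d1) - f (p + t *\<^sub>R e1) - f (p + t *\<^sub>R d1) + f p) / t^2
        - pd i ?g p\<bar> \<le> \<epsilon>" if t: "0 < t" "t < \<delta>" for t
  proof -
    define \<phi> where "\<phi> s = f (p + t *\<^sub>R e1 + s *\<^sub>R d1) - f (p + s *\<^sub>R d1)" for s
    have nb: "norm (t *\<^sub>R e1 + s *\<^sub>R d1) \<le> 2 * t" "norm (s *\<^sub>R d1) \<le> t" if "0 \<le> s" "s \<le> t" for s
    proof -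
      have "norm (t *\<^sub>R e1 + s *\<^sub>R d1) \<le> norm (t *\<^sub>R e1) + norm (s *\<^sub>R d1)" by (rule norm_triangle_ineq)
      also have "\<dots> = t + s" using ne1 that t by simp
      finally show "norm (t *\<^sub>R e1 + s *\<^sub>R d1) \<le> 2 * t" using that by simp
      show "norm (s *\<^sub>R d1) \<le> t" using ne1 that by simp
    qed
    have inU: "p + t *\<^sub>R e1 + s *\<^sub>R d1 \<in> U" "p + s *\<^sub>R d1 \<in> U" if "0 \<le> s" "s \<le> t" for s
    proof -
      have "2 * t < \<delta>0" using t by (simp add: \<delta>_def)
      then have "norm ((p + t *\<^sub>R e1 + s *\<^sub>R d1) - p) < \<delta>0" "norm ((p + s *\<^sub>R d1) - p) < \<delta>0"
        using nb[OF that] t by (simp_all add: add.assoc)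
      then have "dist p (p + t *\<^sub>R e1 + s *\<^sub>R d1) < \<delta>0" "dist p (p + s *\<^sub>R d1) < \<delta>0"
        by (metis dist_commute dist_norm)+
      then show "p + t *\<^sub>R e1 + s *\<^sub>R d1 \<in> U" "p + s *\<^sub>R d1 \<in> U" using \<delta>0 by auto
    qed
    have der: "(\<phi> has_derivative (\<lambda>h. h * (?g (p + t *\<^sub>R e1 + s *\<^sub>R d1) - ?g (p + s *\<^sub>R d1)))) (at s)"
      if "0 \<le> s" "s \<le> t" for s
    proof -
      have a: "((\<lambda>s. f (p + t *\<^sub>R e1 + s *\<^sub>R d1)) has_derivative (\<lambda>h. h * ?g (p + t *\<^sub>R e1 + s *\<^sub>R d1))) (at s)"
        using line_deriv[of f "p + t *\<^sub>R e1" s j] df inU[OF that] unfolding d1_def by blast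
      have b: "((\<lambda>s. f (p + s *\<^sub>R d1)) has_derivative (\<lambda>h. h * ?g (p + s *\<^sub>R d1))) (at s)"
        using line_deriv[of f p s j] df inU[OF that] unfolding d1_def by blast
      show ?thesis unfolding \<phi>_def using has_derivative_diff[OF a b] by (simp add: right_diff_distrib)
    qed
    have cont: "continuous_on {0..t} \<phi>"
      using der by (auto intro!: continuous_at_imp_continuous_on has_derivative_continuous)
    obtain \<xi> where \<xi>: "0 < \<xi>" "\<xi> < t"
      and mv: "\<phi> t - \<phi> 0 = (t - 0) * (?g (p + t *\<^sub>R e1 + \<xi> *\<^sub>R d1) - ?g (p + \<xi> *\<^sub>R d1))"
      using mvt[OF t(1) cont, of "\<lambda>s h. h * (?g (p + t *\<^sub>R e1 + s *\<^sub>R d1) - ?g (p + s *\<^sub>R d1))"] der by auto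
    define y1 where "y1 = p + t *\<^sub>R e1 + \<xi> *\<^sub>R d1"
    define y2 where "y2 = p + \<xi> *\<^sub>R d1"
    have n1: "norm (y1 - p) \<le> 2 * t" "norm (y2 - p) \<le> t"
      using nb[of \<xi>] \<xi> unfolding y1_def y2_def by (simp_all add: add.assoc)
    have "2 * t < \<delta>1" using t by (simp add: \<delta>_def)
    then have h1: "\<bar>?g y1 - ?g p - ?L (y1 - p)\<bar> \<le> (\<epsilon>/3) * (2 * t)"
      and h2: "\<bar>?g y2 - ?g p - ?L (y2 - p)\<bar> \<le> (\<epsilon>/3) * t"
      using H[of y1] H[of y2] n1 e t
      by (smt (verit) mult_left_mono zero_le_divide_iff)+
    have Ld: "?L (y1 - p) - ?L (y2 - p) = t * pd i ?g p"
    proof -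
      have "?L (y1 - p) - ?L (y2 - p) = ?L ((y1 - p) - (y2 - p))" using linear_diff[OF bl] by simp
      also have "(y1 - p) - (y2 - p) = t *\<^sub>R e1" unfolding y1_def y2_def by simp
      also have "?L (t *\<^sub>R e1) = t * ?L e1" using linear_cmul[OF bl] by simp
      finally show ?thesis unfolding pd_def e1_def by simp
    qed
    have X: "\<bar>(?g y1 - ?g y2) - t * pd i ?g p\<bar> \<le> \<epsilon> * t"
    proof -
      have eq: "\<epsilon>/3*(2*t) + \<epsilon>/3*t = \<epsilon>*t" by (simp add: field_simps)
      show ?thesis using h1 h2 Ld eq unfolding abs_le_iff by linarith
    qed
    have D: "f (p + t *\<^sub>R e1 + t *\<^sub>R d1) - f (p + t *\<^sub>R e1) - f (p + t *\<^sub>R d1) + f p = t * (?g y1 - ?g y2)"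
      using mv unfolding \<phi>_def y1_def y2_def by simp
    have "(t * (?g y1 - ?g y2)) / t^2 - pd i ?g p = ((?g y1 - ?g y2) - t * pd i ?g p) / t"
      using t by (simp add: power2_eq_square field_simps)
    then have "\<bar>(t * (?g y1 - ?g y2)) / t^2 - pd i ?g p\<bar> = \<bar>(?g y1 - ?g y2) - t * pd i ?g p\<bar> / t"
      using t by (simp add: abs_divide)
    also have "\<dots> \<le> \<epsilon>" using X t by (simp add: divide_le_eq mult.commute)
    finally show ?thesis unfolding D .
  qed
  ultimately show ?thesis unfolding e1_def d1_def by blast
qed

lemma schwarz:
  fixes f :: "pt \<Rightarrow> real"
  assumes U: "open U" "p \<in> U" and df: "\<forall>q\<in>U. f differentiable (at q)"
    and dj: "pd j f differentiable (at p)" and di: "pd i f differentiable (at p)"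
  shows "pd i (pd j f) p = pd j (pd i f) p"
proof (rule ccontr)
  assume ne: "pd i (pd j f) p \<noteq> pd j (pd i f) p"
  define \<epsilon> where "\<epsilon> = \<bar>pd i (pd j f) p - pd j (pd i f) p\<bar> / 3"
  have e: "\<epsilon> > 0" using ne by (simp add: \<epsilon>_def)
  obtain d1 where d1: "d1 > 0" "\<forall>t. 0 < t \<and> t < d1 \<longrightarrow>
     \<bar>(f (p + t *\<^sub>R axis i 1 + t *\<^sub>R axis j 1) - f (p + t *\<^sub>R axis i 1) - f (p + t *\<^sub>R axis j 1) + f p) / t^2
        - pd i (pd j f) p\<bar> \<le> \<epsilon>"
    using schwarz_aux[OF U df dj e, of i] by blast
  obtain d2 where d2: "d2 > 0" "\<forall>t. 0 < t \<and> t < d2 \<longrightarrow>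
     \<bar>(f (p + t *\<^sub>R axis j 1 + t *\<^sub>R axis i 1) - f (p + t *\<^sub>R axis j 1) - f (p + t *\<^sub>R axis i 1) + f p) / t^2
        - pd j (pd i f) p\<bar> \<le> \<epsilon>"
    using schwarz_aux[OF U df di e, of j] by blast
  define t where "t = min d1 d2 / 2"
  have t: "0 < t" "t < d1" "t < d2" using d1 d2 by (auto simp: t_def)
  have sw: "p + t *\<^sub>R axis j 1 + t *\<^sub>R axis i 1 = p + t *\<^sub>R axis i 1 + t *\<^sub>R axis j 1"
    by (simp add: algebra_simps)
  define D where "D = (f (p + t *\<^sub>R axis i 1 + t *\<^sub>R axis j 1) - f (p + t *\<^sub>R axis i 1) - f (p + t *\<^sub>R axis j 1) + f p) / t^2"
  have D2: "(f (p + t *\<^sub>R axis j 1 + t *\<^sub>R axis i 1) - f (p + t *\<^sub>R axis j 1) - f (p + t *\<^sub>R axis i 1) + f p) / t^2 = D"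
    unfolding D_def sw by simp
  have "\<bar>D - pd i (pd j f) p\<bar> \<le> \<epsilon>" using d1(2) t unfolding D_def by blast
  moreover have "\<bar>D - pd j (pd i f) p\<bar> \<le> \<epsilon>" using d2(2) t D2 by metis
  ultimately show False using e unfolding \<epsilon>_def abs_le_iff by (simp add: abs_if split: if_splits)
qed


lemma sum_axis: "(\<Sum>i\<in>UNIV. axis a (1::real) $ i * h i) = (h a :: real)"
proof -
  have "\<And>i. axis a (1::real) $ i * h i = (if i = a then h i else 0)" by (simp add: axis_def)
  then show ?thesis by (simp add: sum.delta)
qed

lemma cov_coord: "cov G (coord a) W q $ l = pd a (\<lambda>q. W q $ l) q + (\<Sum>j\<in>UNIV. christ G l a j q * W q $ j)"
  unfolding cov_def coord_def by (simp add: sum_axis)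

lemma bracket_coord: "bracket (coord a) Y p $ k = pd a (\<lambda>q. Y q $ k) p"
  unfolding bracket_def coord_def by (simp add: sum_axis pd_const)

lemma pd_sum: "(\<And>k. k \<in> S \<Longrightarrow> f k differentiable (at p)) \<Longrightarrow>
   pd i (\<lambda>q. \<Sum>k\<in>S. f k q :: real) p = (\<Sum>k\<in>S. pd i (f k) p)"
proof -
  assume a: "\<And>k. k \<in> S \<Longrightarrow> f k differentiable (at p)"
  have "((\<lambda>q. \<Sum>k\<in>S. f k q) has_derivative (\<lambda>h. \<Sum>k\<in>S. frechet_derivative (f k) (at p) h)) (at p)"
    by (rule has_derivative_sum) (use a diff_has in blast)
  from pd_has[OF this, of i] show ?thesis by (simp add: pd_def)
qed

lemmas dintros = differentiable_add differentiable_diff differentiable_mult differentiable_const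

lemma pd_cov: 
  assumes hG: "\<And>k i j. christ G k i j differentiable (at p)"
    and hY: "\<And>k. (\<lambda>q. Y q $ k) differentiable (at p)"
    and hZ: "\<And>k. (\<lambda>q. Z q $ k) differentiable (at p)"
    and hdZ: "\<And>k i. pd i (\<lambda>q. Z q $ k) differentiable (at p)"
  shows "pd a (\<lambda>q. cov G Y Z q $ l) p = (\<Sum>i\<in>UNIV. pd a (\<lambda>q. Y q $ i) p * (pd i (\<lambda>q. Z q $ l) p + (\<Sum>j\<in>UNIV. christ G l i j p * Z p $ j))
     + Y p $ i * (pd a (pd i (\<lambda>q. Z q $ l)) p + (\<Sum>j\<in>UNIV. pd a (christ G l i j) p * Z p $ j + christ G l i j p * pd a (\<lambda>q. Z q $ j) p)))"
proof -
  have hG': "\<And>k i j. (\<lambda>q. christ G k i j q) differentiable (at p)" using hG by simp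
  have hdZ': "\<And>k i. (\<lambda>q. pd i (\<lambda>q. Z q $ k) q) differentiable (at p)" using hdZ by simp
  have "pd a (\<lambda>q. cov G Y Z q $ l) p = pd a (\<lambda>q. \<Sum>i\<in>UNIV. Y q $ i * (pd i (\<lambda>q. Z q $ l) q + (\<Sum>j\<in>UNIV. christ G l i j q * Z q $ j))) p"
    unfolding cov_def by simp
  also have "\<dots> = (\<Sum>i\<in>UNIV. pd a (\<lambda>q. Y q $ i * (pd i (\<lambda>q. Z q $ l) q + (\<Sum>j\<in>UNIV. christ G l i j q * Z q $ j))) p)"
    by (rule pd_sum) (auto intro!: dintros differentiable_sum hY hZ hG' hdZ')
  also have "\<dots> = (\<Sum>i\<in>UNIV. pd a (\<lambda>q. Y q $ i) p * (pd i (\<lambda>q. Z q $ l) p + (\<Sum>j\<in>UNIV. christ G l i j p * Z p $ j))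
     + Y p $ i * (pd a (pd i (\<lambda>q. Z q $ l)) p + (\<Sum>j\<in>UNIV. pd a (christ G l i j) p * Z p $ j + christ G l i j p * pd a (\<lambda>q. Z q $ j) p)))"
    by (simp add: pd_mult pd_add pd_sum hY hZ hG' hdZ' dintros differentiable_sum algebra_simps)
  finally show ?thesis .
qed

definition Rc :: "mfield \<Rightarrow> 3 \<Rightarrow> 3 \<Rightarrow> 3 \<Rightarrow> 3 \<Rightarrow> pt \<Rightarrow> real" where
  "Rc G l a j m p = pd a (christ G l j m) p - pd j (christ G l a m) p
     + (\<Sum>n\<in>UNIV. christ G l a n p * christ G n j m p - christ G l j n p * christ G n a m p)"

lemma curv_coord:
  assumes hG: "\<And>k i j. christ G k i j differentiable (at p)"
    and hY: "\<And>k. (\<lambda>q. Y q $ k) differentiable (at p)"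
    and hZ: "\<And>k. (\<lambda>q. Z q $ k) differentiable (at p)"
    and hdZ: "\<And>k i. pd i (\<lambda>q. Z q $ k) differentiable (at p)"
    and hsym: "\<And>k i j. pd i (pd j (\<lambda>q. Z q $ k)) p = pd j (pd i (\<lambda>q. Z q $ k)) p"
  shows "curv G (coord a) Y Z p $ l = (\<Sum>j\<in>UNIV. \<Sum>m\<in>UNIV. Y p $ j * Z p $ m * Rc G l a j m p)"
proof -
  have hG': "\<And>k i j. (\<lambda>q. christ G k i j q) differentiable (at p)" using hG by simp
  have hdZ': "\<And>k i. (\<lambda>q. pd i (\<lambda>q. Z q $ k) q) differentiable (at p)" using hdZ by simp
  have T1: "cov G (coord a) (cov G Y Z) p $ l = pd a (\<lambda>q. cov G Y Z q $ l) p + (\<Sum>j\<in>UNIV. christ G l a j p * cov G Y Z p $ j)"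
    by (rule cov_coord)
  have V: "(\<lambda>q. cov G (coord a) Z q $ k) = (\<lambda>q. pd a (\<lambda>q. Z q $ k) q + (\<Sum>j\<in>UNIV. christ G k a j q * Z q $ j))" for k
    by (simp add: cov_coord)
  have pV: "pd i (\<lambda>q. cov G (coord a) Z q $ k) p = pd i (pd a (\<lambda>q. Z q $ k)) p
      + (\<Sum>j\<in>UNIV. pd i (christ G k a j) p * Z p $ j + christ G k a j p * pd i (\<lambda>q. Z q $ j) p)" for i k
    unfolding V by (simp add: pd_mult pd_add pd_sum hY hZ hG' hdZ' dintros differentiable_sum algebra_simps)
  have T2: "cov G Y (cov G (coord a) Z) p $ l = (\<Sum>i\<in>UNIV. Y p $ i * (pd i (\<lambda>q. cov G (coord a) Z q $ l) p
       + (\<Sum>j\<in>UNIV. christ G l i j p * cov G (coord a) Z p $ j)))"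
    by (simp add: cov_def)
  have T3: "cov G (bracket (coord a) Y) Z p $ l = (\<Sum>i\<in>UNIV. pd a (\<lambda>q. Y q $ i) p * (pd i (\<lambda>q. Z q $ l) p
       + (\<Sum>j\<in>UNIV. christ G l i j p * Z p $ j)))"
    by (simp add: cov_def bracket_coord)
  have "curv G (coord a) Y Z p $ l = cov G (coord a) (cov G Y Z) p $ l - cov G Y (cov G (coord a) Z) p $ l
     - cov G (bracket (coord a) Y) Z p $ l" by (simp add: curv_def)
  also have "\<dots> = (\<Sum>j\<in>UNIV. \<Sum>m\<in>UNIV. Y p $ j * Z p $ m * Rc G l a j m p)"
    unfolding T1 T2 T3 pV pd_cov[OF hG hY hZ hdZ]
    apply (simp only: cov_coord)
    apply (simp only: cov_def Rc_def sum3 vec_lambda_beta)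
    apply (simp only: hsym[where k=l and j=a])
    by (simp add: algebra_simps)
  finally show ?thesis .
qed


definition RicC :: "mfield \<Rightarrow> 3 \<Rightarrow> 3 \<Rightarrow> pt \<Rightarrow> real" where
  "RicC G j m p = (\<Sum>a\<in>UNIV. \<Sum>b\<in>UNIV. \<Sum>l\<in>UNIV. ginv G p $ a $ b * Rc G l a j m p * (G p *v axis b 1) $ l)"

lemma swap_out: "(\<Sum>x\<in>X. \<Sum>y\<in>Y. \<Sum>z\<in>Z. f x y z) = (\<Sum>y\<in>Y. \<Sum>z\<in>Z. \<Sum>x\<in>X. (f x y z :: real))"
proof -
  have "(\<Sum>x\<in>X. \<Sum>y\<in>Y. \<Sum>z\<in>Z. f x y z) = (\<Sum>y\<in>Y. \<Sum>x\<in>X. \<Sum>z\<in>Z. f x y z)"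
    by (rule sum.swap)
  also have "\<dots> = (\<Sum>y\<in>Y. \<Sum>z\<in>Z. \<Sum>x\<in>X. f x y z)"
    by (rule sum.cong[OF refl], rule sum.swap)
  finally show ?thesis .
qed

lemma ricci_coord:
  assumes hG: "\<And>k i j. christ G k i j differentiable (at p)"
    and hY: "\<And>k. (\<lambda>q. Y q $ k) differentiable (at p)"
    and hZ: "\<And>k. (\<lambda>q. Z q $ k) differentiable (at p)"
    and hdZ: "\<And>k i. pd i (\<lambda>q. Z q $ k) differentiable (at p)"
    and hsym: "\<And>k i j. pd i (pd j (\<lambda>q. Z q $ k)) p = pd j (pd i (\<lambda>q. Z q $ k)) p"
  shows "ricci G Y Z p = (\<Sum>j\<in>UNIV. \<Sum>m\<in>UNIV. Y p $ j * Z p $ m * RicC G j m p)"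
proof -
  have "ricci G Y Z p = (\<Sum>a\<in>UNIV. \<Sum>b\<in>UNIV. ginv G p $ a $ b * (\<Sum>l\<in>UNIV.
      (\<Sum>j\<in>UNIV. \<Sum>m\<in>UNIV. Y p $ j * Z p $ m * Rc G l a j m p) * (G p *v axis b 1) $ l))"
    unfolding ricci_def curv4_def metric_def inner_vec_def coord_def
    using curv_coord[OF hG hY hZ hdZ hsym, unfolded coord_def] by simp
  also have "\<dots> = (\<Sum>j\<in>UNIV. \<Sum>m\<in>UNIV. Y p $ j * Z p $ m * RicC G j m p)"
  proof -
    have "(\<Sum>a\<in>UNIV. \<Sum>b\<in>UNIV. ginv G p $ a $ b * (\<Sum>l\<in>UNIV.
      (\<Sum>j\<in>UNIV. \<Sum>m\<in>UNIV. Y p $ j * Z p $ m * Rc G l a j m p) * (G p *v axis b 1) $ l))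
      = (\<Sum>a\<in>UNIV. \<Sum>b\<in>UNIV. \<Sum>l\<in>UNIV. \<Sum>j\<in>UNIV. \<Sum>m\<in>UNIV.
         Y p $ j * Z p $ m * (ginv G p $ a $ b * Rc G l a j m p * (G p *v axis b 1) $ l))"
      by (simp add: sum_distrib_left sum_distrib_right mult_ac)
    also have "\<dots> = (\<Sum>a\<in>UNIV. \<Sum>b\<in>UNIV. \<Sum>j\<in>UNIV. \<Sum>m\<in>UNIV. \<Sum>l\<in>UNIV. Y p $ j * Z p $ m * (ginv G p $ a $ b * Rc G l a j m p * (G p *v axis b 1) $ l))"
      by (rule sum.cong[OF refl], rule sum.cong[OF refl], rule swap_out)
    also have "\<dots> = (\<Sum>a\<in>UNIV. \<Sum>j\<in>UNIV. \<Sum>m\<in>UNIV. \<Sum>b\<in>UNIV. \<Sum>l\<in>UNIV. Y p $ j * Z p $ m * (ginv G p $ a $ b * Rc G l a j m p * (G p *v axis b 1) $ l))"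
      by (rule sum.cong[OF refl], rule swap_out)
    also have "\<dots> = (\<Sum>j\<in>UNIV. \<Sum>m\<in>UNIV. \<Sum>a\<in>UNIV. \<Sum>b\<in>UNIV. \<Sum>l\<in>UNIV. Y p $ j * Z p $ m * (ginv G p $ a $ b * Rc G l a j m p * (G p *v axis b 1) $ l))"
      by (rule swap_out)
    also have "\<dots> = (\<Sum>j\<in>UNIV. \<Sum>m\<in>UNIV. Y p $ j * Z p $ m * RicC G j m p)"
      unfolding RicC_def by (simp add: sum_distrib_left)
    finally show ?thesis .
  qed
  finally show ?thesis .
qed


lemma matrix_inv_eq:
  fixes A B :: "real^'n^'n"
  assumes "A ** B = mat 1" "B ** A = mat 1"
  shows "matrix_inv A = B"
  unfolding matrix_inv_def
proof (rule some_equality)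
  show "A ** B = mat 1 \<and> B ** A = mat 1" using assms by simp
next
  fix C assume c: "A ** C = mat 1 \<and> C ** A = mat 1"
  have "C = C ** (A ** B)" using assms by (simp add: matrix_mul_rid)
  also have "\<dots> = (C ** A) ** B" by (simp add: matrix_mul_assoc)
  also have "\<dots> = B" using c by (simp add: matrix_mul_lid)
  finally show "C = B" .
qed

definition Dm :: "(pt \<Rightarrow> real) \<Rightarrow> (pt \<Rightarrow> real) \<Rightarrow> mfield" where
  "Dm a b = (\<lambda>q. vector [vector [a q, 0, 0], vector [0, a q, 0], vector [0, 0, b q]])"

definition gd :: "(pt \<Rightarrow> real) \<Rightarrow> (pt \<Rightarrow> real) \<Rightarrow> 3 \<Rightarrow> pt \<Rightarrow> real" where
  "gd a b i = (if i = 3 then b else a)"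

lemma cases3: "(P 1 \<Longrightarrow> P 2 \<Longrightarrow> P 3 \<Longrightarrow> P (i::3))"
  using exhaust_3[of i] by auto

lemma Dm_entry: "Dm a b q $ i $ j = (if i = j then gd a b i q else 0)"
  unfolding Dm_def gd_def
  by (rule cases3[of _ i]; rule cases3[of _ j]; simp)

lemma ginv_Dm:
  assumes "a q \<noteq> 0" "b q \<noteq> 0"
  shows "ginv (Dm a b) q $ i $ j = (if i = j then 1 / gd a b i q else 0)"
proof -
  define B :: "real^3^3" where "B = (\<chi> i j. if i = j then 1 / gd a b i q else 0)"
  have g0: "gd a b i q \<noteq> 0" for i using assms by (simp add: gd_def)
  have "Dm a b q ** B = mat 1" "B ** Dm a b q = mat 1"
    unfolding vec_eq_iff matrix_matrix_mult_def mat_def B_def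
    by (simp_all add: Dm_entry sum3 forall_3 g0)
  then have "ginv (Dm a b) q = B" unfolding ginv_def by (rule matrix_inv_eq)
  then show ?thesis unfolding B_def by simp
qed


lemma pd_if: "pd i (\<lambda>q. if C then f q else g q) p = (if C then pd i f p else pd i g p)"
  by (cases C) simp_all

lemma pd_Dm_entry: "pd i (\<lambda>q. Dm a b q $ j $ k) q = (if j = k then pd i (gd a b j) q else 0)"
  by (simp add: Dm_entry pd_if pd_const)

definition CN :: "(pt \<Rightarrow> real) \<Rightarrow> (pt \<Rightarrow> real) \<Rightarrow> 3 \<Rightarrow> 3 \<Rightarrow> 3 \<Rightarrow> pt \<Rightarrow> real" where
  "CN a b k i j q = (if j = k then pd i (gd a b k) q else 0) + (if i = k then pd j (gd a b k) q else 0)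
      - (if i = j then pd k (gd a b i) q else 0)"

definition CD :: "(pt \<Rightarrow> real) \<Rightarrow> (pt \<Rightarrow> real) \<Rightarrow> 3 \<Rightarrow> 3 \<Rightarrow> 3 \<Rightarrow> pt \<Rightarrow> real" where
  "CD a b k i j q = CN a b k i j q / (2 * gd a b k q)"

lemma christ_Dm:
  assumes "a q \<noteq> 0" "b q \<noteq> 0"
  shows "christ (Dm a b) k i j q = CD a b k i j q"
proof -
  have g0: "gd a b i q \<noteq> 0" for i using assms by (simp add: gd_def)
  have "christ (Dm a b) k i j q = (1/2) * (\<Sum>l\<in>UNIV. (if k = l then 1 / gd a b k q else 0) *
     ((if j = l then pd i (gd a b j) q else 0) + (if i = l then pd j (gd a b i) q else 0) - (if i = j then pd l (gd a b i) q else 0)))"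
    unfolding christ_def ginv_Dm[of a q b, OF assms] pd_Dm_entry ..
  also have "\<dots> = (1/2) * ((1 / gd a b k q) *
     ((if j = k then pd i (gd a b j) q else 0) + (if i = k then pd j (gd a b i) q else 0) - (if i = j then pd k (gd a b i) q else 0)))"
    by (simp add: if_distrib[of "\<lambda>x. x * _"] sum.delta cong: if_cong)
  also have "\<dots> = CD a b k i j q"
    unfolding CD_def CN_def using g0[of k] by (auto simp: field_simps)
  finally show ?thesis .
qed

lemma pd_divide: "f differentiable (at p) \<Longrightarrow> g differentiable (at p) \<Longrightarrow> g p \<noteq> 0 \<Longrightarrow>
   pd i (\<lambda>q. f q / g q :: real) p = pd i f p / g p - f p * pd i g p / (g p)^2"
proof -
  assume a: "f differentiable (at p)" "g differentiable (at p)" "g p \<noteq> 0"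
  have "((\<lambda>q. f q / g q) has_derivative (\<lambda>h. - f p * (inverse (g p) * frechet_derivative g (at p) h * inverse (g p)) + frechet_derivative f (at p) h / g p)) (at p)"
    by (rule has_derivative_divide[OF diff_has[OF a(1)] diff_has[OF a(2)] a(3)])
  from pd_has[OF this, of i]
  have "pd i (\<lambda>q. f q / g q :: real) p = - f p * (inverse (g p) * pd i g p * inverse (g p)) + pd i f p / g p"
    by (simp only: pd_def)
  also have "\<dots> = pd i f p / g p - f p * pd i g p / (g p)^2"
    by (simp add: power2_eq_square divide_inverse)
  finally show ?thesis .
qed

lemma diff_if: "f differentiable (at p) \<Longrightarrow> (\<lambda>q. if C then f q else 0) differentiable (at p)"
  by (cases C) simp_all

definition dCN :: "(pt \<Rightarrow> real) \<Rightarrow> (pt \<Rightarrow> real) \<Rightarrow> 3 \<Rightarrow> 3 \<Rightarrow> 3 \<Rightarrow> 3 \<Rightarrow> pt \<Rightarrow> real" where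
  "dCN a b c k i j p = (if j = k then pd c (pd i (gd a b k)) p else 0) + (if i = k then pd c (pd j (gd a b k)) p else 0)
      - (if i = j then pd c (pd k (gd a b i)) p else 0)"

lemma pd_CD:
  assumes hg: "\<And>k. gd a b k differentiable (at p)"
    and hd: "\<And>i k. pd i (gd a b k) differentiable (at p)"
    and g0: "\<And>k. gd a b k p \<noteq> 0"
  shows "pd c (CD a b k i j) p = dCN a b c k i j p / (2 * gd a b k p)
     - CN a b k i j p * (2 * pd c (gd a b k) p) / (2 * gd a b k p)^2"
proof -
  have hd': "\<And>i k. (\<lambda>q. pd i (gd a b k) q) differentiable (at p)" using hd by simp
  have hg': "\<And>k. (\<lambda>q. gd a b k q) differentiable (at p)" using hg by simp
  have dN: "(\<lambda>q. CN a b k i j q) differentiable (at p)"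
    unfolding CN_def by (intro differentiable_add differentiable_diff diff_if hd')
  have dD: "(\<lambda>q. 2 * gd a b k q) differentiable (at p)"
    by (intro differentiable_mult differentiable_const hg')
  have pN: "pd c (\<lambda>q. CN a b k i j q) p = dCN a b c k i j p"
    unfolding CN_def dCN_def
    by (simp add: pd_add pd_diff pd_if pd_const diff_if hd' differentiable_add)
  have pD: "pd c (\<lambda>q. 2 * gd a b k q) p = 2 * pd c (gd a b k) p"
    using pd_cmult[OF hg'[of k], of c 2] by simp
  have "pd c (CD a b k i j) p = pd c (\<lambda>q. CN a b k i j q / (2 * gd a b k q)) p"
    unfolding CD_def ..
  also have "\<dots> = pd c (\<lambda>q. CN a b k i j q) p / (2 * gd a b k p) - CN a b k i j p * pd c (\<lambda>q. 2 * gd a b k q) p / (2 * gd a b k p)^2"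
    by (rule pd_divide[OF dN dD]) (use g0 in simp)
  finally show ?thesis unfolding pN pD .
qed

lemma RicC_Dm_trace:
  assumes "a p \<noteq> 0" "b p \<noteq> 0"
  shows "RicC (Dm a b) j m p = (\<Sum>k\<in>UNIV. Rc (Dm a b) k k j m p)"
proof -
  have g0: "gd a b i p \<noteq> 0" for i using assms by (simp add: gd_def)
  have mv: "(Dm a b p *v axis c 1) $ l = (if l = c then gd a b l p else 0)" for c l
    unfolding matrix_vector_mult_def by (rule cases3[of _ c]; simp add: Dm_entry axis_def sum3 cong: if_cong)
  show ?thesis
    unfolding RicC_def mv ginv_Dm[of a p b, OF assms] by (simp add: sum3 g0)
qed

definition dCD :: "(pt \<Rightarrow> real) \<Rightarrow> (pt \<Rightarrow> real) \<Rightarrow> 3 \<Rightarrow> 3 \<Rightarrow> 3 \<Rightarrow> 3 \<Rightarrow> pt \<Rightarrow> real" where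
  "dCD a b c k i j p = dCN a b c k i j p / (2 * gd a b k p)
     - CN a b k i j p * (2 * pd c (gd a b k) p) / (2 * gd a b k p)^2"

lemma RicC_Dm:
  assumes U: "open U" "p \<in> U" and nz: "\<forall>q\<in>U. a q \<noteq> 0 \<and> b q \<noteq> 0"
    and hg: "\<And>k. gd a b k differentiable (at p)"
    and hd: "\<And>i k. pd i (gd a b k) differentiable (at p)"
  shows "RicC (Dm a b) j m p = (\<Sum>k\<in>UNIV. dCD a b k k j m p - dCD a b j k k m p
     + (\<Sum>n\<in>UNIV. CD a b k k n p * CD a b n j m p - CD a b k j n p * CD a b n k m p))"
proof -
  have nzp: "a p \<noteq> 0" "b p \<noteq> 0" using nz U by auto
  have g0: "\<And>k. gd a b k p \<noteq> 0" using nzp by (simp add: gd_def)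
  have ch: "christ (Dm a b) k i j p = CD a b k i j p" for k i j using christ_Dm[of a p b, OF nzp] .
  have pch: "pd c (christ (Dm a b) k i j) p = dCD a b c k i j p" for c k i j
  proof -
    have "pd c (christ (Dm a b) k i j) p = pd c (CD a b k i j) p"
      by (rule pd_cong_open[OF U]) (use nz christ_Dm in blast)
    also have "\<dots> = dCD a b c k i j p" unfolding dCD_def by (rule pd_CD[OF hg hd g0])
    finally show ?thesis .
  qed
  show ?thesis unfolding RicC_Dm_trace[of a p b, OF nzp] Rc_def pch ch ..
qed


definition EE :: "(pt \<Rightarrow> real) \<Rightarrow> (pt \<Rightarrow> real) \<Rightarrow> 3 \<Rightarrow> 3 \<Rightarrow> pt \<Rightarrow> real" where
  "EE a b j m p = (\<Sum>k\<in>UNIV. dCD a b k k j m p - dCD a b j k k m p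
     + (\<Sum>n\<in>UNIV. CD a b k k n p * CD a b n j m p - CD a b k j n p * CD a b n k m p))"

lemma gd1: "gd a b 1 = a" "gd a b 2 = a" "gd a b 3 = b" by (simp_all add: gd_def)

lemma facts:
  assumes nz: "A p \<noteq> 0" "B p \<noteq> 0"
    and m1: "\<And>c. pd c (\<lambda>q. - A q) p = - pd c A p"
    and m2: "\<And>c i. pd c (pd i (\<lambda>q. - A q)) p = - pd c (pd i A) p"
  shows "EE (\<lambda>q. - A q) B 1 2 p = EE A B 1 2 p"
    "EE (\<lambda>q. - A q) B 2 1 p = EE A B 2 1 p"
    "EE (\<lambda>q. - A q) B 1 3 p = EE A B 1 3 p"
    "EE (\<lambda>q. - A q) B 3 1 p = EE A B 3 1 p"
    "EE (\<lambda>q. - A q) B 2 3 p = EE A B 2 3 p"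
    "EE (\<lambda>q. - A q) B 3 2 p = EE A B 3 2 p"
    "EE (\<lambda>q. - A q) B 1 1 p - EE A B 1 1 p = EE (\<lambda>q. - A q) B 2 2 p - EE A B 2 2 p"
  unfolding EE_def dCD_def dCN_def CD_def CN_def sum3
  using nz by (simp_all add: gd1 m1 m2 field_simps)

lemma CD_diff:
  assumes hg: "\<And>k. gd a b k differentiable (at p)"
    and hd: "\<And>i k. pd i (gd a b k) differentiable (at p)"
    and g0: "\<And>k. gd a b k p \<noteq> 0"
  shows "CD a b k i j differentiable (at p)"
proof -
  have hd': "\<And>i k. (\<lambda>q. pd i (gd a b k) q) differentiable (at p)" using hd by simp
  have hg': "\<And>k. (\<lambda>q. gd a b k q) differentiable (at p)" using hg by simp
  have dN: "(\<lambda>q. CN a b k i j q) differentiable (at p)"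
    unfolding CN_def by (intro differentiable_add differentiable_diff diff_if hd')
  have dD: "(\<lambda>q. 2 * gd a b k q) differentiable (at p)"
    by (intro differentiable_mult differentiable_const hg')
  have "(\<lambda>q. CN a b k i j q / (2 * gd a b k q)) differentiable (at p)"
    by (rule differentiable_divide[OF dN dD]) (use g0 in simp)
  then show ?thesis unfolding CD_def by simp
qed

lemma diff_cong_open:
  assumes "open U" "p \<in> U" "\<forall>q\<in>U. f q = g q" "f differentiable (at p)"
  shows "g differentiable (at p)"
  using assms has_derivative_transform_within_open[of f _ p UNIV U g]
  unfolding differentiable_def by blast

lemma christ_Dm_diff:
  assumes U: "open U" "p \<in> U" and nz: "\<forall>q\<in>U. a q \<noteq> 0 \<and> b q \<noteq> 0"
    and hg: "\<And>k. gd a b k differentiable (at p)"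
    and hd: "\<And>i k. pd i (gd a b k) differentiable (at p)"
  shows "christ (Dm a b) k i j differentiable (at p)"
proof -
  have g0: "\<And>k. gd a b k p \<noteq> 0" using nz U by (simp add: gd_def)
  show ?thesis
    by (rule diff_cong_open[OF U _ CD_diff[OF hg hd g0, of k i j]]) (use nz in \<open>simp add: christ_Dm\<close>)
qed

lemma ricci_Dm:
  assumes U: "open U" "p \<in> U" and nz: "\<forall>q\<in>U. a q \<noteq> 0 \<and> b q \<noteq> 0"
    and hg: "\<And>k. gd a b k differentiable (at p)"
    and hd: "\<And>i k. pd i (gd a b k) differentiable (at p)"
    and hY: "\<And>k. (\<lambda>q. Y q $ k) differentiable (at p)"
    and hZ: "\<And>k. (\<lambda>q. Z q $ k) differentiable (at p)"
    and hdZ: "\<And>k i. pd i (\<lambda>q. Z q $ k) differentiable (at p)"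
    and hsym: "\<And>k i j. pd i (pd j (\<lambda>q. Z q $ k)) p = pd j (pd i (\<lambda>q. Z q $ k)) p"
  shows "ricci (Dm a b) Y Z p = (\<Sum>j\<in>UNIV. \<Sum>m\<in>UNIV. Y p $ j * Z p $ m * EE a b j m p)"
  unfolding ricci_coord[OF christ_Dm_diff[OF U nz hg hd] hY hZ hdZ hsym] RicC_Dm[OF U nz hg hd] EE_def ..

lemma pd_const_fun: "pd j (\<lambda>q. c) = (\<lambda>q. 0)"
  by (rule ext) (rule pd_const)

lemma ricci_Dm_coord:
  assumes U: "open U" "p \<in> U" and nz: "\<forall>q\<in>U. a q \<noteq> 0 \<and> b q \<noteq> 0"
    and hg: "\<And>k. gd a b k differentiable (at p)"
    and hd: "\<And>i k. pd i (gd a b k) differentiable (at p)"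
  shows "ricci (Dm a b) (coord i) (coord j) p = EE a b i j p"
proof -
  have "ricci (Dm a b) (coord i) (coord j) p = (\<Sum>ja\<in>UNIV. \<Sum>m\<in>UNIV. coord i p $ ja * coord j p $ m * EE a b ja m p)"
    by (rule ricci_Dm[OF U nz hg hd]) (simp_all add: coord_def pd_const_fun pd_const)
  also have "\<dots> = EE a b i j p"
    unfolding coord_def by (rule cases3[of _ i]; rule cases3[of _ j]; simp add: sum3 axis_def)
  finally show ?thesis .
qed


lemma sm_diff: "smooth_on U f \<Longrightarrow> q \<in> U \<Longrightarrow> f differentiable (at q)"
  unfolding smooth_on_def by (metis ipd.simps(1))

lemma sm_diff1: "smooth_on U f \<Longrightarrow> q \<in> U \<Longrightarrow> pd i f differentiable (at q)"
  unfolding smooth_on_def by (metis ipd.simps)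

lemma gmat_Dm: "gmat A B = Dm A B"
  unfolding gmat_def Dm_def ..

lemma Pmat_eq: "Pmat = vector [vector [-1, 0, 0], vector [0, -1, 0], vector [0, 0, 1]]"
  unfolding Pmat_def Qmat_def vec_eq_iff matrix_matrix_mult_def
  by (simp add: forall_3 sum3)

lemma gtmat_Dm: "gtmat A B = Dm (\<lambda>q. - A q) B"
  unfolding gtmat_def gmat_def Dm_def Pmat_eq
  by (rule ext) (simp add: vec_eq_iff matrix_matrix_mult_def forall_3 sum3)

lemma metric_Dm: "metric (Dm a b) X Y p = (\<Sum>i\<in>UNIV. X p $ i * gd a b i p * Y p $ i)"
  unfolding metric_def inner_vec_def matrix_vector_mult_def
  by (simp add: Dm_entry sum3 gd1)

lemma rtrace_Dm:
  assumes "h p \<noteq> 0" "k p \<noteq> 0"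
  shows "rtrace (Dm h k) G p = (\<Sum>i\<in>UNIV. ricci G (coord i) (coord i) p / gd h k i p)"
  unfolding rtrace_def ginv_Dm[of h p k, OF assms]
  by (simp add: sum3)


theorem theorem4p2:
  fixes U :: "(real^3) set" and A B :: "real^3 \<Rightarrow> real"
    and X Y :: "real^3 \<Rightarrow> real^3" and p :: "real^3"
  assumes "open U"
    and "smooth_on U A" and "smooth_on U B"
    and "\<forall>q\<in>U. A q > 0 \<and> B q > 0"
    and "smooth_vf U X" and "smooth_vf U Y"
    and "p \<in> U"
  shows "ricci (gtmat A B) X Y p =
      ricci (gmat A B) X Y p
    + (1/8) * (3 * rtrace (gmat A B) (gtmat A B) p + rtrace (gtmat A B) (gtmat A B) p
               - 3 * rtrace (gmat A B) (gmat A B) p - rtrace (gtmat A B) (gmat A B) p)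
      * metric (gmat A B) X Y p
    + (1/8) * (3 * rtrace (gtmat A B) (gtmat A B) p + rtrace (gmat A B) (gtmat A B) p
               - 3 * rtrace (gtmat A B) (gmat A B) p - rtrace (gmat A B) (gmat A B) p)
      * metric (gtmat A B) X Y p"
proof -
  note U = assms(1) assms(7)
  have dA: "\<And>q. q \<in> U \<Longrightarrow> A differentiable (at q)" using sm_diff assms(2) by blast
  have dB: "\<And>q. q \<in> U \<Longrightarrow> B differentiable (at q)" using sm_diff assms(3) by blast
  have dA1: "\<And>q i. q \<in> U \<Longrightarrow> pd i A differentiable (at q)" using sm_diff1 assms(2) by blast
  have dB1: "\<And>q i. q \<in> U \<Longrightarrow> pd i B differentiable (at q)" using sm_diff1 assms(3) by blast
  have nz1: "\<forall>q\<in>U. A q \<noteq> 0 \<and> B q \<noteq> 0" using assms(4) by auto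
  have nz2: "\<forall>q\<in>U. - A q \<noteq> 0 \<and> B q \<noteq> 0" using assms(4) by auto
  have nzp: "A p \<noteq> 0" "B p \<noteq> 0" "- A p \<noteq> 0" using nz1 U by auto
  have dmA: "(\<lambda>q. - A q) differentiable (at p)" using dA[OF assms(7)] by (rule differentiable_minus)
  have pmA_U: "\<forall>q\<in>U. - pd i A q = pd i (\<lambda>q. - A q) q" for i
    using dA pd_minus by metis
  have dmA1: "pd i (\<lambda>q. - A q) differentiable (at p)" for i
  proof -
    have "(\<lambda>q. - pd i A q) differentiable (at p)" using dA1[OF assms(7)] by (rule differentiable_minus)
    then show ?thesis by (rule diff_cong_open[OF U pmA_U])
  qed
  have m1: "\<And>c. pd c (\<lambda>q. - A q) p = - pd c A p" using pd_minus dA[OF assms(7)] by metis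
  have m2: "pd c (pd i (\<lambda>q. - A q)) p = - pd c (pd i A) p" for c i
  proof -
    have "pd c (pd i (\<lambda>q. - A q)) p = pd c (\<lambda>q. - pd i A q) p"
      by (rule pd_cong_open[OF U]) (use pmA_U in metis)
    also have "\<dots> = - pd c (pd i A) p" by (rule pd_minus[OF dA1[OF assms(7)]])
    finally show ?thesis .
  qed
  have hg1: "\<And>k. gd A B k differentiable (at p)" using dA dB U by (simp add: gd_def)
  have hd1: "\<And>i k. pd i (gd A B k) differentiable (at p)" using dA1 dB1 U by (simp add: gd_def)
  have hg2: "\<And>k. gd (\<lambda>q. - A q) B k differentiable (at p)" using dmA dB U by (simp add: gd_def)
  have hd2: "\<And>i k. pd i (gd (\<lambda>q. - A q) B k) differentiable (at p)" using dmA1 dB1 U by (simp add: gd_def)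
  have sX: "\<And>k. smooth_on U (\<lambda>q. X q $ k)" using assms(5) by (simp add: smooth_vf_def)
  have sY: "\<And>k. smooth_on U (\<lambda>q. Y q $ k)" using assms(6) by (simp add: smooth_vf_def)
  have hX: "\<And>k. (\<lambda>q. X q $ k) differentiable (at p)" using sm_diff[OF sX] U by blast
  have hY: "\<And>k. (\<lambda>q. Y q $ k) differentiable (at p)" using sm_diff[OF sY] U by blast
  have hdY: "\<And>k i. pd i (\<lambda>q. Y q $ k) differentiable (at p)" using sm_diff1[OF sY] U by blast
  have hsym: "\<And>k i j. pd i (pd j (\<lambda>q. Y q $ k)) p = pd j (pd i (\<lambda>q. Y q $ k)) p"
    using schwarz[OF U] sm_diff[OF sY] hdY by blast
  have R1: "ricci (gmat A B) X Y p = (\<Sum>j\<in>UNIV. \<Sum>m\<in>UNIV. X p $ j * Y p $ m * EE A B j m p)"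
    unfolding gmat_Dm by (rule ricci_Dm[OF U nz1 hg1 hd1 hX hY hdY hsym])
  have R2: "ricci (gtmat A B) X Y p = (\<Sum>j\<in>UNIV. \<Sum>m\<in>UNIV. X p $ j * Y p $ m * EE (\<lambda>q. - A q) B j m p)"
    unfolding gtmat_Dm by (rule ricci_Dm[OF U nz2 hg2 hd2 hX hY hdY hsym])
  have C1: "ricci (gmat A B) (coord i) (coord i) p = EE A B i i p" for i
    unfolding gmat_Dm by (rule ricci_Dm_coord[OF U nz1 hg1 hd1])
  have C2: "ricci (gtmat A B) (coord i) (coord i) p = EE (\<lambda>q. - A q) B i i p" for i
    unfolding gtmat_Dm by (rule ricci_Dm_coord[OF U nz2 hg2 hd2])
  have T1: "rtrace (gmat A B) G p = (\<Sum>i\<in>UNIV. ricci G (coord i) (coord i) p / gd A B i p)" for G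
    unfolding gmat_Dm by (rule rtrace_Dm) (use nzp in auto)
  have T2: "rtrace (gtmat A B) G p = (\<Sum>i\<in>UNIV. ricci G (coord i) (coord i) p / gd (\<lambda>q. - A q) B i p)" for G
    unfolding gtmat_Dm by (rule rtrace_Dm) (use nzp in auto)
  note F = facts[of A p B, OF nzp(1,2) m1 m2]
  have F7: "EE (\<lambda>q. - A q) B 2 2 p = EE (\<lambda>q. - A q) B 1 1 p - EE A B 1 1 p + EE A B 2 2 p"
    using F(7) by simp
  show ?thesis
    unfolding R1 R2 T1 T2 C1 C2 metric_Dm
    unfolding gmat_Dm gtmat_Dm metric_Dm
    apply (simp only: sum3 gd1 F(1-6) F7)
    using nzp by (simp add: field_simps)
qed

end
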